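(* Let $m\ge2$. For $p=1,\dots,m$ let $C^p=\bigoplus_{i=1}^sC^p_i$ be an orthogonal direct sum of finite-dimensional Hilbert spaces and $A^p\in\mathcal{L}(C^p)$ positive definite. Let $f_p\in\mathcal{H}_{A^p}\setminus\{0\}$, $p=1,\dots,m$. Then the simple tensor $f_1\otimes\cdots\otimes f_m\in\bigotimes_p\mathcal{H}_{A^p}$ is extremal if and only if there exists $i\in\{1,\dots,s\}$ such that $f_p\in A^p(C^p_i)$ for every $p=1,\dots,m$.
   Context: $\mathcal{H}_{A^p}$ is $C^p$ with inner product $\langle x,y\rangle=\langle (A^p)^{-1}x,y\rangle_{C^p}$. $\bigotimes_p\mathcal{H}_{A^p}$ is the Hilbert tensor product. Let $\phi^*:\bigotimes_p\mathcal{H}_{A^p}\to\bigoplus_{i=1}^sC^1_i\otimes\cdots\otimes C^m_i$ be the linear map with $\phi^*(f_1\otimes\cdots\otimes f_m)=(f_1(i)\otimes\cdots\otimes f_m(i))_{i=1}^s$, where $f(i)$ denotes the $C^p_i$-component of $f\in C^p$. Equip the range of $\phi^*$ with the range norm $\|\phi^*F\|=\inf\{\|G\|:\phi^*G=\phi^*F\}$ (this is the Hadamard product RKHS). An element $F$ is called extremal (for $m\ge2$) if $\|\phi^*F\|=\|F\|_{\bigotimes_p\mathcal{H}_{A^p}}$, equivalently $F\in(\ker\phi^* )^\perp$. *)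

theory Defs
  imports "HOL-Analysis.Analysis"
begin

(* C^p = complex^{d p}, coordinates 0..<d p; coordinate k belongs to block blk p k in {1..s};
   C^p_i = vectors supported on the coordinates of block i (orthogonal direct sum).
   Operators on C^p are matrices nat => nat => complex on {0..<d p}. *)

definition pos_def :: "nat \<Rightarrow> (nat \<Rightarrow> nat \<Rightarrow> complex) \<Rightarrow> bool" where
  "pos_def d A \<longleftrightarrow> (\<forall>k<d. \<forall>l<d. A l k = cnj (A k l)) \<and>
     (\<forall>x. (\<exists>k<d. x k \<noteq> 0) \<longrightarrow> Re (\<Sum>k<d. \<Sum>l<d. cnj (x k) * A k l * x l) > 0)"

definition is_inv :: "nat \<Rightarrow> (nat \<Rightarrow> nat \<Rightarrow> complex) \<Rightarrow> (nat \<Rightarrow> nat \<Rightarrow> complex) \<Rightarrow> bool" where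
  "is_inv d A B \<longleftrightarrow>
     (\<forall>k<d. \<forall>l<d. (\<Sum>r<d. A k r * B r l) = (if k = l then 1 else 0)) \<and>
     (\<forall>k<d. \<forall>l<d. (\<Sum>r<d. B k r * A r l) = (if k = l then 1 else 0))"

definition minv :: "nat \<Rightarrow> (nat \<Rightarrow> nat \<Rightarrow> complex) \<Rightarrow> (nat \<Rightarrow> nat \<Rightarrow> complex)" where
  "minv d A = (SOME B. is_inv d A B)"

(* index set of the tensor product: multi-indices (j_0,...,j_{m-1}) *)
definition tidx :: "nat \<Rightarrow> (nat \<Rightarrow> nat) \<Rightarrow> nat list set" where
  "tidx m d = {js. length js = m \<and> (\<forall>p<m. js ! p < d p)}"

(* inner product of the Hilbert tensor product of the H_{A^p}:
   <F,G> = < ((A^0)^{-1} (x) ... (x) (A^{m-1})^{-1}) F, G > *)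
definition tinner :: "nat \<Rightarrow> (nat \<Rightarrow> nat) \<Rightarrow> (nat \<Rightarrow> nat \<Rightarrow> nat \<Rightarrow> complex)
      \<Rightarrow> (nat list \<Rightarrow> complex) \<Rightarrow> (nat list \<Rightarrow> complex) \<Rightarrow> complex" where
  "tinner m d A F G = (\<Sum>j\<in>tidx m d. \<Sum>k\<in>tidx m d.
      (\<Prod>p<m. minv (d p) (A p) (j ! p) (k ! p)) * F k * cnj (G j))"

definition stensor :: "nat \<Rightarrow> (nat \<Rightarrow> nat \<Rightarrow> complex) \<Rightarrow> nat list \<Rightarrow> complex" where
  "stensor m f js = (\<Prod>p<m. f p (js ! p))"

definition phi_star :: "nat \<Rightarrow> (nat \<Rightarrow> nat) \<Rightarrow> (nat \<Rightarrow> nat \<Rightarrow> nat)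
      \<Rightarrow> (nat list \<Rightarrow> complex) \<Rightarrow> nat \<Rightarrow> nat list \<Rightarrow> complex" where
  "phi_star m d blk F i js = (if js \<in> tidx m d \<and> (\<forall>p<m. blk p (js ! p) = i) then F js else 0)"

definition extremal :: "nat \<Rightarrow> (nat \<Rightarrow> nat) \<Rightarrow> (nat \<Rightarrow> nat \<Rightarrow> nat) \<Rightarrow> nat
      \<Rightarrow> (nat \<Rightarrow> nat \<Rightarrow> nat \<Rightarrow> complex) \<Rightarrow> (nat list \<Rightarrow> complex) \<Rightarrow> bool" where
  "extremal m d blk s A F \<longleftrightarrow>
     (\<forall>G. (\<forall>i\<in>{1..s}. \<forall>js. phi_star m d blk G i js = 0) \<longrightarrow> tinner m d A F G = 0)"

definition in_image_block :: "nat \<Rightarrow> (nat \<Rightarrow> nat \<Rightarrow> complex) \<Rightarrow> (nat \<Rightarrow> nat) \<Rightarrow> nat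
      \<Rightarrow> (nat \<Rightarrow> complex) \<Rightarrow> bool" where
  "in_image_block d A b i f \<longleftrightarrow>
     (\<exists>u. (\<forall>k<d. b k \<noteq> i \<longrightarrow> u k = 0) \<and> (\<forall>k<d. f k = (\<Sum>l<d. A k l * u l)))"

end

theory Submission imports Defs "Jordan_Normal_Form.Determinant" begin
lemma inv_exists:
  assumes "pos_def d A"
  shows "is_inv d A (minv d A)"
proof -
  define M where "M = mat d d (\<lambda>(i,j). A i j)"
  have Mc: "M \<in> carrier_mat d d" unfolding M_def by simp
  have "det M \<noteq> 0"
  proof
    assume "det M = 0"
    then obtain v where v: "v \<in> carrier_vec d" "v \<noteq> 0\<^sub>v d" "M *\<^sub>v v = 0\<^sub>v d"
      using det_0_iff_vec_prod_zero[OF Mc] by auto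
    define x where "x = (\<lambda>k. if k < d then v $ k else 0)"
    have "\<exists>k<d. x k \<noteq> 0"
    proof (rule ccontr)
      assume "\<not> ?thesis"
      hence "v = 0\<^sub>v d" using v(1) unfolding x_def by (auto intro!: eq_vecI)
      with v(2) show False by simp
    qed
    hence pos: "Re (\<Sum>k<d. \<Sum>l<d. cnj (x k) * A k l * x l) > 0"
      using assms unfolding pos_def_def by blast
    have row0: "(\<Sum>l<d. A k l * x l) = 0" if "k < d" for k
    proof -
      have "(M *\<^sub>v v) $ k = 0" using v(3) that by simp
      moreover have "(M *\<^sub>v v) $ k = (\<Sum>l<d. A k l * x l)"
        using that v(1) unfolding M_def x_def
        by (auto simp: mult_mat_vec_def scalar_prod_def lessThan_atLeast0 intro!: sum.cong)
      ultimately show ?thesis by simp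
    qed
    have "(\<Sum>k<d. \<Sum>l<d. cnj (x k) * A k l * x l) = (\<Sum>k<d. cnj (x k) * (\<Sum>l<d. A k l * x l))"
      by (simp add: sum_distrib_left mult.assoc)
    also have "\<dots> = 0" using row0 by simp
    finally show False using pos by simp
  qed
  from det_non_zero_imp_unit[OF Mc this, of "()"]
  obtain N where N: "N \<in> carrier_mat d d" "N * M = 1\<^sub>m d" "M * N = 1\<^sub>m d"
    unfolding Units_def ring_mat_def by auto
  have "is_inv d A (\<lambda>k l. N $$ (k,l))"
    unfolding is_inv_def
  proof (intro conjI allI impI)
    fix k l assume kl: "k < d" "l < d"
    have "(M * N) $$ (k,l) = (\<Sum>r<d. A k r * N $$ (r,l))"
      using kl N(1) unfolding M_def
      by (auto simp: scalar_prod_def lessThan_atLeast0 intro!: sum.cong)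
    thus "(\<Sum>r<d. A k r * N $$ (r,l)) = (if k = l then 1 else 0)" using N(3) kl by simp
    have "(N * M) $$ (k,l) = (\<Sum>r<d. N $$ (k,r) * A r l)"
      using kl N(1) unfolding M_def
      by (auto simp: scalar_prod_def lessThan_atLeast0 intro!: sum.cong)
    thus "(\<Sum>r<d. N $$ (k,r) * A r l) = (if k = l then 1 else 0)" using N(2) kl by simp
  qed
  thus ?thesis unfolding minv_def by (rule someI[where x="\<lambda>k l. N $$ (k,l)"])
qed
lemma tidx_Suc:
  "tidx (Suc m) d = (\<lambda>(xs,x). xs @ [x]) ` (tidx m d \<times> {..<d m})"
proof (rule equalityI; rule subsetI)
  fix js assume "js \<in> tidx (Suc m) d"
  hence js: "length js = Suc m" "\<forall>p<Suc m. js ! p < d p" unfolding tidx_def by auto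
  then obtain xs x where e: "js = xs @ [x]" by (metis length_Suc_conv_rev)
  have "length xs = m" using js(1) e by simp
  moreover have "\<forall>p<m. xs ! p < d p" using js(2) e \<open>length xs = m\<close>
    by (metis less_SucI nth_append_left)
  moreover have "x < d m" using js(2) e \<open>length xs = m\<close> by (metis lessI nth_append_length)
  ultimately show "js \<in> (\<lambda>(xs,x). xs @ [x]) ` (tidx m d \<times> {..<d m})"
    using e unfolding tidx_def by auto
next
  fix js assume "js \<in> (\<lambda>(xs,x). xs @ [x]) ` (tidx m d \<times> {..<d m})"
  then obtain xs x where e: "js = xs @ [x]" "length xs = m" "\<forall>p<m. xs ! p < d p" "x < d m"
    unfolding tidx_def by auto
  show "js \<in> tidx (Suc m) d" unfolding tidx_def using e
    by (auto simp: nth_append less_Suc_eq)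
qed

lemma tidx_sum_prod:
  "finite (tidx m d) \<and>
   (\<Sum>k\<in>tidx m d. \<Prod>p<m. g p (k ! p)) = (\<Prod>p<m. \<Sum>l<d p. (g p l :: complex))"
proof (induction m)
  case 0
  have "tidx 0 d = {[]}" unfolding tidx_def by auto
  thus ?case by simp
next
  case (Suc m)
  have inj: "inj_on (\<lambda>(xs,x). xs @ [x]) (tidx m d \<times> {..<d m})"
    by (auto simp: inj_on_def)
  have fin: "finite (tidx (Suc m) d)" using Suc.IH unfolding tidx_Suc by auto
  have "(\<Sum>k\<in>tidx (Suc m) d. \<Prod>p<Suc m. g p (k ! p))
      = (\<Sum>(xs,x)\<in>tidx m d \<times> {..<d m}. \<Prod>p<Suc m. g p ((xs @ [x]) ! p))"
    unfolding tidx_Suc by (subst sum.reindex[OF inj]) (simp add: case_prod_unfold)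
  also have "\<dots> = (\<Sum>(xs,x)\<in>tidx m d \<times> {..<d m}. (\<Prod>p<m. g p (xs ! p)) * g m x)"
  proof (rule sum.cong[OF refl])
    fix z assume "z \<in> tidx m d \<times> {..<d m}"
    then obtain xs x where z: "z = (xs,x)" "length xs = m" unfolding tidx_def by auto
    have "(\<Prod>p<m. g p ((xs @ [x]) ! p)) = (\<Prod>p<m. g p (xs ! p))"
      by (rule prod.cong) (auto simp: nth_append z)
    thus "(case z of (xs,x) \<Rightarrow> \<Prod>p<Suc m. g p ((xs @ [x]) ! p)) =
          (case z of (xs,x) \<Rightarrow> (\<Prod>p<m. g p (xs ! p)) * g m x)"
      using z by (simp add: nth_append)
  qed
  also have "\<dots> = (\<Sum>xs\<in>tidx m d. \<Prod>p<m. g p (xs ! p)) * (\<Sum>x<d m. g m x)"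
    by (simp add: sum_product sum.cartesian_product)
  also have "\<dots> = (\<Prod>p<Suc m. \<Sum>l<d p. g p l)" using Suc.IH by simp
  finally show ?case using fin by simp
qed

lemma delta_sum_aux: "(k::nat) < n \<Longrightarrow> (\<Sum>r<n. (if k = r then 1 else 0) * (g r::complex)) = g k"
proof -
  assume k: "k < n"
  have "(\<Sum>r<n. (if k = r then 1 else 0) * g r) = (\<Sum>r<n. if k = r then g r else 0)"
    by (rule sum.cong) auto
  also have "\<dots> = g k" using k by (subst sum.delta') auto
  finally show ?thesis .
qed

theorem mainTheorem7:
  fixes m s :: nat and d :: "nat \<Rightarrow> nat" and blk :: "nat \<Rightarrow> nat \<Rightarrow> nat"
    and A :: "nat \<Rightarrow> nat \<Rightarrow> nat \<Rightarrow> complex" and f :: "nat \<Rightarrow> nat \<Rightarrow> complex"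
  assumes "m \<ge> 2"
    and "\<forall>p<m. \<forall>k<d p. blk p k \<in> {1..s}"
    and "\<forall>p<m. pos_def (d p) (A p)"
    and "\<forall>p<m. \<exists>k<d p. f p k \<noteq> 0"
  shows "extremal m d blk s A (stensor m f) \<longleftrightarrow>
         (\<exists>i\<in>{1..s}. \<forall>p<m. in_image_block (d p) (A p) (blk p) i (f p))"
proof -
  note m2 = assms(1) and hf = assms(4)
  define B where "B p = minv (d p) (A p)" for p
  have inv: "is_inv (d p) (A p) (B p)" if "p < m" for p
    unfolding B_def using inv_exists assms(3) that by blast
  define u where "u p k = (\<Sum>l<d p. B p k l * f p l)" for p k
  define U where "U j = (\<Prod>p<m. u p (j ! p))" for j
  define D where "D j = (\<exists>i\<in>{1..s}. \<forall>p<m. blk p (j ! p) = i)" for j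
  have fin: "finite (tidx m d)" using tidx_sum_prod by blast
  have inner_k: "(\<Sum>k\<in>tidx m d. (\<Prod>p<m. B p (j ! p) (k ! p)) * stensor m f k) = U j" for j
  proof -
    have "(\<Sum>k\<in>tidx m d. (\<Prod>p<m. B p (j ! p) (k ! p)) * stensor m f k)
        = (\<Sum>k\<in>tidx m d. \<Prod>p<m. B p (j ! p) (k ! p) * f p (k ! p))"
      unfolding stensor_def by (simp add: prod.distrib)
    also have "\<dots> = U j" unfolding U_def u_def
      using tidx_sum_prod[of m d "\<lambda>p l. B p (j ! p) l * f p l"] by simp
    finally show ?thesis .
  qed
  have tinner_eq: "tinner m d A (stensor m f) G = (\<Sum>j\<in>tidx m d. U j * cnj (G j))" for G
    unfolding tinner_def B_def[symmetric]
    by (simp add: inner_k[symmetric] sum_distrib_right mult.assoc)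
  have ext_iff: "extremal m d blk s A (stensor m f) \<longleftrightarrow> (\<forall>j\<in>tidx m d. \<not> D j \<longrightarrow> U j = 0)"
  proof
    assume ex: "extremal m d blk s A (stensor m f)"
    show "\<forall>j\<in>tidx m d. \<not> D j \<longrightarrow> U j = 0"
    proof (intro ballI impI)
      fix j assume j: "j \<in> tidx m d" "\<not> D j"
      define G where "G k = (if k = j then 1 else (0::complex))" for k
      have "\<forall>i\<in>{1..s}. \<forall>js. phi_star m d blk G i js = 0"
        using j unfolding phi_star_def G_def D_def by auto
      hence "tinner m d A (stensor m f) G = 0" using ex unfolding extremal_def by blast
      moreover have "(\<Sum>k\<in>tidx m d. U k * cnj (G k)) = U j"
        using j(1) fin unfolding G_def by (simp add: if_distrib cong: if_cong)
      ultimately show "U j = 0" using tinner_eq by simp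
    qed
  next
    assume h: "\<forall>j\<in>tidx m d. \<not> D j \<longrightarrow> U j = 0"
    show "extremal m d blk s A (stensor m f)" unfolding extremal_def
    proof (intro allI impI)
      fix G assume g: "\<forall>i\<in>{1..s}. \<forall>js. phi_star m d blk G i js = 0"
      have "U j * cnj (G j) = 0" if "j \<in> tidx m d" for j
      proof (cases "D j")
        case True
        then obtain i where "i \<in> {1..s}" "\<forall>p<m. blk p (j ! p) = i" unfolding D_def by blast
        hence "G j = 0" using g that unfolding phi_star_def by (metis (no_types, lifting))
        thus ?thesis by simp
      next
        case False thus ?thesis using h that by simp
      qed
      hence z: "\<forall>j\<in>tidx m d. U j * cnj (G j) = 0" by blast
      show "tinner m d A (stensor m f) G = 0" unfolding tinner_eq
        using sum.neutral[of "tidx m d" "\<lambda>j. U j * cnj (G j)"] z by blast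
    qed
  qed
  have fAu: "f p k = (\<Sum>l<d p. A p k l * u p l)" if p: "p < m" and k: "k < d p" for p k
  proof -
    have "(\<Sum>l<d p. A p k l * u p l) = (\<Sum>l<d p. A p k l * (\<Sum>r<d p. B p l r * f p r))"
      unfolding u_def by simp
    also have "\<dots> = (\<Sum>l<d p. \<Sum>r<d p. A p k l * (B p l r * f p r))"
      by (simp add: sum_distrib_left)
    also have "\<dots> = (\<Sum>r<d p. \<Sum>l<d p. A p k l * (B p l r * f p r))"
      by (rule sum.swap)
    also have "\<dots> = (\<Sum>r<d p. (\<Sum>l<d p. A p k l * B p l r) * f p r)"
      by (simp add: sum_distrib_right mult.assoc)
    also have "\<dots> = (\<Sum>r<d p. (if k = r then 1 else 0) * f p r)"
      using inv[OF p] k unfolding is_inv_def by simp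
    also have "\<dots> = f p k" using k by (rule delta_sum_aux)
    finally show ?thesis by simp
  qed
  have blk_iff: "in_image_block (d p) (A p) (blk p) i (f p) \<longleftrightarrow>
      (\<forall>k<d p. blk p k \<noteq> i \<longrightarrow> u p k = 0)" if p: "p < m" for p i
  proof
    assume "in_image_block (d p) (A p) (blk p) i (f p)"
    then obtain v where v: "\<forall>k<d p. blk p k \<noteq> i \<longrightarrow> v k = 0"
      "\<forall>k<d p. f p k = (\<Sum>l<d p. A p k l * v l)" unfolding in_image_block_def by blast
    have "u p k = v k" if k: "k < d p" for k
    proof -
      have "u p k = (\<Sum>l<d p. B p k l * (\<Sum>r<d p. A p l r * v r))"
        unfolding u_def using v(2) by simp
      also have "\<dots> = (\<Sum>l<d p. \<Sum>r<d p. B p k l * (A p l r * v r))"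
        by (simp add: sum_distrib_left)
      also have "\<dots> = (\<Sum>r<d p. \<Sum>l<d p. B p k l * (A p l r * v r))"
        by (rule sum.swap)
      also have "\<dots> = (\<Sum>r<d p. (\<Sum>l<d p. B p k l * A p l r) * v r)"
        by (simp add: sum_distrib_right mult.assoc)
      also have "\<dots> = (\<Sum>r<d p. (if k = r then 1 else 0) * v r)"
        using inv[OF p] k unfolding is_inv_def by simp
      also have "\<dots> = v k" using k by (rule delta_sum_aux)
      finally show ?thesis .
    qed
    thus "\<forall>k<d p. blk p k \<noteq> i \<longrightarrow> u p k = 0" using v(1) by simp
  next
    assume h: "\<forall>k<d p. blk p k \<noteq> i \<longrightarrow> u p k = 0"
    have "f p k = (\<Sum>l<d p. A p k l * u p l)" if "k < d p" for k using fAu p that by blast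
    thus "in_image_block (d p) (A p) (blk p) i (f p)" unfolding in_image_block_def
      using h by blast
  qed
  have unz: "\<exists>k<d p. u p k \<noteq> 0" if p: "p < m" for p
  proof -
    obtain k where k: "k < d p" "f p k \<noteq> 0" using hf p by blast
    show ?thesis
    proof (rule ccontr)
      assume "\<not> ?thesis"
      hence "f p k = 0" using fAu[OF p k(1)] by simp
      thus False using k by simp
    qed
  qed
  have Unz: "U j \<noteq> 0 \<longleftrightarrow> (\<forall>p<m. u p (j ! p) \<noteq> 0)" for j
    unfolding U_def by auto
  have comb: "(\<forall>j\<in>tidx m d. \<not> D j \<longrightarrow> U j = 0) \<longleftrightarrow>
      (\<exists>i\<in>{1..s}. \<forall>p<m. \<forall>k<d p. blk p k \<noteq> i \<longrightarrow> u p k = 0)"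
  proof
    assume h: "\<forall>j\<in>tidx m d. \<not> D j \<longrightarrow> U j = 0"
    obtain w where w: "\<forall>p<m. w p < d p \<and> u p (w p) \<noteq> 0" using unz by metis
    define j0 where "j0 = map w [0..<m]"
    have j0: "j0 \<in> tidx m d" "\<forall>p<m. j0 ! p = w p" using w unfolding j0_def tidx_def by auto
    have "U j0 \<noteq> 0" using Unz j0(2) w by simp
    with h j0 obtain i where i: "i \<in> {1..s}" "\<forall>p<m. blk p (w p) = i"
      unfolding D_def by (metis j0(2))
    have "\<forall>p<m. \<forall>k<d p. blk p k \<noteq> i \<longrightarrow> u p k = 0"
    proof (intro allI impI)
      fix p k assume pk: "p < m" "k < d p" "blk p k \<noteq> i"
      show "u p k = 0"
      proof (rule ccontr)
        assume uk: "u p k \<noteq> 0"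
        define j1 where "j1 = j0[p := k]"
        have j1n: "j1 ! q = (if q = p then k else w q)" if "q < m" for q
          using j0 that pk unfolding j1_def tidx_def by auto
        have "j1 \<in> tidx m d" using j0(1) pk j1n w unfolding tidx_def j1_def by auto
        moreover have "U j1 \<noteq> 0" using Unz j1n w uk by simp
        ultimately obtain i' where i': "\<forall>q<m. blk q (j1 ! q) = i'" using h unfolding D_def by blast
        obtain q where q: "q < m" "q \<noteq> p" using m2 pk
          by (metis One_nat_def Suc_1 Suc_le_lessD less_one not_less_eq_eq zero_less_Suc)
        have "i' = i" using i'[rule_format, OF q(1)] j1n[OF q(1)] q i(2) by simp
        thus False using i'[rule_format, OF pk(1)] j1n[OF pk(1)] pk(3) by simp
      qed
    qed
    with i show "\<exists>i\<in>{1..s}. \<forall>p<m. \<forall>k<d p. blk p k \<noteq> i \<longrightarrow> u p k = 0" by blast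
  next
    assume "\<exists>i\<in>{1..s}. \<forall>p<m. \<forall>k<d p. blk p k \<noteq> i \<longrightarrow> u p k = 0"
    then obtain i where i: "i \<in> {1..s}" "\<forall>p<m. \<forall>k<d p. blk p k \<noteq> i \<longrightarrow> u p k = 0" by blast
    show "\<forall>j\<in>tidx m d. \<not> D j \<longrightarrow> U j = 0"
    proof (intro ballI impI)
      fix j assume j: "j \<in> tidx m d" "\<not> D j"
      show "U j = 0"
      proof (rule ccontr)
        assume "U j \<noteq> 0"
        hence "\<forall>p<m. blk p (j ! p) = i" using Unz i(2) j(1) unfolding tidx_def by blast
        thus False using j(2) i(1) unfolding D_def by blast
      qed
    qed
  qed
  show ?thesis using ext_iff comb blk_iff by simp
qed

end
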